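(* Let $a>0$ and let $L_2=a\mathbb{Z}^3\cup a(\mathbb{Z}+\tfrac12)^3\cup W$. For every $w\in W$, the Voronoi cell of $w$ with respect to $L_2$ has volume $$V^{(2)}_W=\frac{451}{6912}a^3 .$$ Consequently $2V^{(2)}_\Gamma+12V^{(2)}_W=a^3$, where $V^{(2)}_\Gamma=\tfrac{125}{1152}a^3$ is the volume of the Voronoi cell of a point of $a\mathbb{Z}^3\cup a(\mathbb{Z}+\tfrac12)^3$ with respect to $L_2$.
   Context: Fix $a>0$. $W\subset\mathbb{R}^3$ is the set of all points $a(u_1,u_2,u_3)$ such that $(u_1,u_2,u_3)$ is a permutation of a triple $(i,\ j+\tfrac12,\ k+\varepsilon)$ with $i,j,k\in\mathbb{Z}$ and $\varepsilon\in\{\tfrac14,\tfrac34\}$. For a discrete set $P\subset\mathbb{R}^3$ and $p\in P$, the Voronoi cell of $p$ with respect to $P$ is $\{x\in\mathbb{R}^3: |x-p|\le|x-q|\ \text{for all } q\in P\}$. *)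

theory Defs
  imports "HOL-Analysis.Analysis"
begin

definition voronoi_cell :: "'a::metric_space set \<Rightarrow> 'a \<Rightarrow> 'a set" where
  "voronoi_cell P p = {x. \<forall>q\<in>P. dist x p \<le> dist x q}"

definition W_triples :: "(real^3) set" where
  "W_triples = {vector [of_int i, of_int j + 1/2, of_int k + e] | i j k e.
                 e \<in> {1/4, 3/4 :: real}}"

definition W_set :: "real \<Rightarrow> (real^3) set" where
  "W_set a = {a *\<^sub>R (\<chi> i. t $ p i) | t p. t \<in> W_triples \<and> p permutes (UNIV :: 3 set)}"

definition Gamma_set :: "real \<Rightarrow> (real^3) set" where
  "Gamma_set a = {a *\<^sub>R (\<chi> i. of_int (f i)) | f. True}
               \<union> {a *\<^sub>R (\<chi> i. of_int (f i) + 1/2) | f. True}"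

definition L2_set :: "real \<Rightarrow> (real^3) set" where
  "L2_set a = Gamma_set a \<union> W_set a"

end

theory Submission
  imports Defs
begin

definition stdH :: "(real^3) set" where
  "stdH = {y. 0 \<le> y$1 \<and> 0 \<le> y$2 \<and> 0 \<le> y$3 \<and> y$1 + y$2 + y$3 \<le> 1}"
lemma Basis_real3: "(Basis :: (real^3) set) = {axis 1 1, axis 2 1, axis 3 1}"
  by (auto simp: Basis_vec_def UNIV_3)
lemma d: "axis (1::3) (1::real) \<noteq> axis 2 1" "axis (1::3) (1::real) \<noteq> axis 3 1" "axis (2::3) (1::real) \<noteq> axis 3 1"
    by (auto simp: axis_eq_axis)
lemma s3: "sum (\<lambda>i. (x::real^3)\<bullet>i) Basis = x$1 + x$2 + x$3"
  unfolding Basis_real3 using d by (simp add: inner_axis add.assoc)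
lemma b3: "(\<forall>i\<in>(Basis::(real^3) set). P i) \<longleftrightarrow> P (axis 1 1) \<and> P (axis 2 1) \<and> P (axis 3 1)"
  unfolding Basis_real3 by simp
lemma stdH_hull: "stdH = convex hull (insert 0 Basis)"
  unfolding std_simplex stdH_def s3 b3 by (simp add: inner_axis)

lemma stdH_compact: "compact stdH"
  unfolding stdH_hull by (intro finite_imp_compact_convex_hull) auto

lemma stdH_measure: "measure lebesgue stdH = 1/6"
proof -
  have "measure lebesgue stdH = Henstock_Kurzweil_Integration.content stdH"
    using stdH_compact by (intro measure_completion) (auto dest: compact_imp_closed)
  also have "\<dots> = 1/6" unfolding stdH_hull by (simp add: content_std_simplex fact_numeral)
  finally show ?thesis .
qed

definition det3 :: "real^3 \<Rightarrow> real^3 \<Rightarrow> real^3 \<Rightarrow> real" where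
  "det3 e1 e2 e3 = e1$1 * e2$2 * e3$3 + e2$1 * e3$2 * e1$3 + e3$1 * e1$2 * e2$3
     - e1$1 * e3$2 * e2$3 - e2$1 * e1$2 * e3$3 - e3$1 * e2$2 * e1$3"

lemma simplex_vol:
  fixes v0 e1 e2 e3 :: "real^3"
  shows "(\<lambda>y. v0 + (y$1 *\<^sub>R e1 + y$2 *\<^sub>R e2 + y$3 *\<^sub>R e3)) ` stdH \<in> lmeasurable"
    and "measure lebesgue ((\<lambda>y. v0 + (y$1 *\<^sub>R e1 + y$2 *\<^sub>R e2 + y$3 *\<^sub>R e3)) ` stdH) = \<bar>det3 e1 e2 e3\<bar> / 6"
proof -
  define g where "g = (\<lambda>y::real^3. y$1 *\<^sub>R e1 + y$2 *\<^sub>R e2 + y$3 *\<^sub>R e3)"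
  have lin: "linear g" unfolding g_def
    by (intro linearI) (auto simp: algebra_simps)
  have cg: "compact (g ` stdH)"
    using stdH_compact lin by (intro compact_continuous_image linear_continuous_on) (auto simp: linear_linear)
  have eq: "(\<lambda>y. v0 + (y$1 *\<^sub>R e1 + y$2 *\<^sub>R e2 + y$3 *\<^sub>R e3)) ` stdH = (+) v0 ` (g ` stdH)"
    by (auto simp: g_def image_image)
  have mg: "g ` stdH \<in> lmeasurable" using cg by (simp add: lmeasurable_compact)
  show "(\<lambda>y. v0 + (y$1 *\<^sub>R e1 + y$2 *\<^sub>R e2 + y$3 *\<^sub>R e3)) ` stdH \<in> lmeasurable"
    unfolding eq by (rule measurable_translation[OF mg])
  have "det (matrix g) = det3 e1 e2 e3"
    unfolding det_3 det3_def by (simp add: matrix_def g_def axis_def)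
  moreover have "measure lebesgue (g ` stdH) = \<bar>det (matrix g)\<bar> * measure lebesgue stdH"
    using stdH_compact lin
    by (intro measure_lebesgue_linear_transformation) (auto simp: compact_imp_bounded dest: compact_imp_closed)
  ultimately show "measure lebesgue ((\<lambda>y. v0 + (y$1 *\<^sub>R e1 + y$2 *\<^sub>R e2 + y$3 *\<^sub>R e3)) ` stdH) = \<bar>det3 e1 e2 e3\<bar> / 6"
    unfolding eq measure_translation stdH_measure by simp
qed

definition inP :: "real^3 \<Rightarrow> bool" where
  "inP x \<longleftrightarrow> 0 \<le> x$1 + x$3 \<and> x$1 \<le> x$3 \<and> x$2 + x$3 \<le> 1 \<and> x$3 \<le> x$2 \<and> 5/16 \<le> x$2 + x$3/2 \<and> x$2 - x$3/2 \<le> 11/16 \<and> x$1 + x$3/2 \<le> 7/16 \<and> - x$1 + x$3/2 \<le> 7/16"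

definition Pset :: "(real^3) set" where "Pset = {x. inP x}"

definition TB :: "(real^3) set" where "TB = {x. 0 \<le> x$1 + x$3 \<and> x$1 \<le> x$3 \<and> x$2 + x$3 \<le> 1 \<and> x$3 \<le> x$2}"

definition C1 :: "(real^3) set" where "C1 = {x. 0 \<le> x$1 + x$3 \<and> x$1 \<le> x$3 \<and> x$2 + x$3 \<le> 1 \<and> x$3 \<le> x$2 \<and> x$2 + x$3/2 \<le> 5/16}"

definition C2 :: "(real^3) set" where "C2 = {x. 0 \<le> x$1 + x$3 \<and> x$1 \<le> x$3 \<and> x$2 + x$3 \<le> 1 \<and> x$3 \<le> x$2 \<and> 11/16 \<le> x$2 - x$3/2}"

definition C3 :: "(real^3) set" where "C3 = {x. 0 \<le> x$1 + x$3 \<and> x$1 \<le> x$3 \<and> x$2 + x$3 \<le> 1 \<and> x$3 \<le> x$2 \<and> 7/16 \<le> x$1 + x$3/2}"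

definition C4 :: "(real^3) set" where "C4 = {x. 0 \<le> x$1 + x$3 \<and> x$1 \<le> x$3 \<and> x$2 + x$3 \<le> 1 \<and> x$3 \<le> x$2 \<and> 7/16 \<le> - x$1 + x$3/2}"

lemma TB_img: "TB = (\<lambda>y. (vector [0, 0, 0] :: real^3) + (y$1 *\<^sub>R (vector [0, 1, 0] :: real^3) + y$2 *\<^sub>R (vector [(1/2), (1/2), (1/2)] :: real^3) + y$3 *\<^sub>R (vector [(-1/2), (1/2), (1/2)] :: real^3))) ` stdH"
proof (rule set_eqI, rule iffI)
  fix x assume "x \<in> TB"
  then have h: "0 \<le> x$1 + x$3 \<and> x$1 \<le> x$3 \<and> x$2 + x$3 \<le> 1 \<and> x$3 \<le> x$2" by (simp add: TB_def)
  show "x \<in> (\<lambda>y. (vector [0, 0, 0] :: real^3) + (y$1 *\<^sub>R (vector [0, 1, 0] :: real^3) + y$2 *\<^sub>R (vector [(1/2), (1/2), (1/2)] :: real^3) + y$3 *\<^sub>R (vector [(-1/2), (1/2), (1/2)] :: real^3))) ` stdH"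
  proof (rule image_eqI[where x="vector [(1 * x$2 + (-1) * x$3 + 0), (1 * x$1 + 1 * x$3 + 0), ((-1) * x$1 + 1 * x$3 + 0)] :: real^3"])
    show "x = (\<lambda>y. (vector [0, 0, 0] :: real^3) + (y$1 *\<^sub>R (vector [0, 1, 0] :: real^3) + y$2 *\<^sub>R (vector [(1/2), (1/2), (1/2)] :: real^3) + y$3 *\<^sub>R (vector [(-1/2), (1/2), (1/2)] :: real^3))) (vector [(1 * x$2 + (-1) * x$3 + 0), (1 * x$1 + 1 * x$3 + 0), ((-1) * x$1 + 1 * x$3 + 0)] :: real^3)"
      by (simp add: vec_eq_iff forall_3 algebra_simps)
    show "(vector [(1 * x$2 + (-1) * x$3 + 0), (1 * x$1 + 1 * x$3 + 0), ((-1) * x$1 + 1 * x$3 + 0)] :: real^3) \<in> stdH"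
      using h by (simp add: stdH_def; linarith)
  qed
next
  fix x assume "x \<in> (\<lambda>y. (vector [0, 0, 0] :: real^3) + (y$1 *\<^sub>R (vector [0, 1, 0] :: real^3) + y$2 *\<^sub>R (vector [(1/2), (1/2), (1/2)] :: real^3) + y$3 *\<^sub>R (vector [(-1/2), (1/2), (1/2)] :: real^3))) ` stdH"
  then obtain y where y: "y \<in> stdH" "x = (\<lambda>y. (vector [0, 0, 0] :: real^3) + (y$1 *\<^sub>R (vector [0, 1, 0] :: real^3) + y$2 *\<^sub>R (vector [(1/2), (1/2), (1/2)] :: real^3) + y$3 *\<^sub>R (vector [(-1/2), (1/2), (1/2)] :: real^3))) y" by blast
  then show "x \<in> TB" by (simp add: stdH_def TB_def; linarith)
qed

lemma TB_meas: "TB \<in> lmeasurable" "measure lebesgue TB = (1/12)"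
  unfolding TB_img by (rule simplex_vol(1)) (simp add: simplex_vol(2) det3_def)

lemma C1_img: "C1 = (\<lambda>y. (vector [0, 0, 0] :: real^3) + (y$1 *\<^sub>R (vector [0, (5/16), 0] :: real^3) + y$2 *\<^sub>R (vector [(5/24), (5/24), (5/24)] :: real^3) + y$3 *\<^sub>R (vector [(-5/24), (5/24), (5/24)] :: real^3))) ` stdH"
proof (rule set_eqI, rule iffI)
  fix x assume "x \<in> C1"
  then have h: "0 \<le> x$1 + x$3 \<and> x$1 \<le> x$3 \<and> x$2 + x$3 \<le> 1 \<and> x$3 \<le> x$2 \<and> x$2 + x$3/2 \<le> 5/16" by (simp add: C1_def)
  show "x \<in> (\<lambda>y. (vector [0, 0, 0] :: real^3) + (y$1 *\<^sub>R (vector [0, (5/16), 0] :: real^3) + y$2 *\<^sub>R (vector [(5/24), (5/24), (5/24)] :: real^3) + y$3 *\<^sub>R (vector [(-5/24), (5/24), (5/24)] :: real^3))) ` stdH"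
  proof (rule image_eqI[where x="vector [((16/5) * x$2 + (-16/5) * x$3 + 0), ((12/5) * x$1 + (12/5) * x$3 + 0), ((-12/5) * x$1 + (12/5) * x$3 + 0)] :: real^3"])
    show "x = (\<lambda>y. (vector [0, 0, 0] :: real^3) + (y$1 *\<^sub>R (vector [0, (5/16), 0] :: real^3) + y$2 *\<^sub>R (vector [(5/24), (5/24), (5/24)] :: real^3) + y$3 *\<^sub>R (vector [(-5/24), (5/24), (5/24)] :: real^3))) (vector [((16/5) * x$2 + (-16/5) * x$3 + 0), ((12/5) * x$1 + (12/5) * x$3 + 0), ((-12/5) * x$1 + (12/5) * x$3 + 0)] :: real^3)"
      by (simp add: vec_eq_iff forall_3 algebra_simps)
    show "(vector [((16/5) * x$2 + (-16/5) * x$3 + 0), ((12/5) * x$1 + (12/5) * x$3 + 0), ((-12/5) * x$1 + (12/5) * x$3 + 0)] :: real^3) \<in> stdH"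
      using h by (simp add: stdH_def; linarith)
  qed
next
  fix x assume "x \<in> (\<lambda>y. (vector [0, 0, 0] :: real^3) + (y$1 *\<^sub>R (vector [0, (5/16), 0] :: real^3) + y$2 *\<^sub>R (vector [(5/24), (5/24), (5/24)] :: real^3) + y$3 *\<^sub>R (vector [(-5/24), (5/24), (5/24)] :: real^3))) ` stdH"
  then obtain y where y: "y \<in> stdH" "x = (\<lambda>y. (vector [0, 0, 0] :: real^3) + (y$1 *\<^sub>R (vector [0, (5/16), 0] :: real^3) + y$2 *\<^sub>R (vector [(5/24), (5/24), (5/24)] :: real^3) + y$3 *\<^sub>R (vector [(-5/24), (5/24), (5/24)] :: real^3))) y" by blast
  then show "x \<in> C1" by (simp add: stdH_def C1_def; linarith)
qed

lemma C1_meas: "C1 \<in> lmeasurable" "measure lebesgue C1 = (125/27648)"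
  unfolding C1_img by (rule simplex_vol(1)) (simp add: simplex_vol(2) det3_def)

lemma C2_img: "C2 = (\<lambda>y. (vector [0, 1, 0] :: real^3) + (y$1 *\<^sub>R (vector [0, (-5/16), 0] :: real^3) + y$2 *\<^sub>R (vector [(5/24), (-5/24), (5/24)] :: real^3) + y$3 *\<^sub>R (vector [(-5/24), (-5/24), (5/24)] :: real^3))) ` stdH"
proof (rule set_eqI, rule iffI)
  fix x assume "x \<in> C2"
  then have h: "0 \<le> x$1 + x$3 \<and> x$1 \<le> x$3 \<and> x$2 + x$3 \<le> 1 \<and> x$3 \<le> x$2 \<and> 11/16 \<le> x$2 - x$3/2" by (simp add: C2_def)
  show "x \<in> (\<lambda>y. (vector [0, 1, 0] :: real^3) + (y$1 *\<^sub>R (vector [0, (-5/16), 0] :: real^3) + y$2 *\<^sub>R (vector [(5/24), (-5/24), (5/24)] :: real^3) + y$3 *\<^sub>R (vector [(-5/24), (-5/24), (5/24)] :: real^3))) ` stdH"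
  proof (rule image_eqI[where x="vector [((-16/5) * x$2 + (-16/5) * x$3 + (16/5)), ((12/5) * x$1 + (12/5) * x$3 + 0), ((-12/5) * x$1 + (12/5) * x$3 + 0)] :: real^3"])
    show "x = (\<lambda>y. (vector [0, 1, 0] :: real^3) + (y$1 *\<^sub>R (vector [0, (-5/16), 0] :: real^3) + y$2 *\<^sub>R (vector [(5/24), (-5/24), (5/24)] :: real^3) + y$3 *\<^sub>R (vector [(-5/24), (-5/24), (5/24)] :: real^3))) (vector [((-16/5) * x$2 + (-16/5) * x$3 + (16/5)), ((12/5) * x$1 + (12/5) * x$3 + 0), ((-12/5) * x$1 + (12/5) * x$3 + 0)] :: real^3)"
      by (simp add: vec_eq_iff forall_3 algebra_simps)
    show "(vector [((-16/5) * x$2 + (-16/5) * x$3 + (16/5)), ((12/5) * x$1 + (12/5) * x$3 + 0), ((-12/5) * x$1 + (12/5) * x$3 + 0)] :: real^3) \<in> stdH"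
      using h by (simp add: stdH_def; linarith)
  qed
next
  fix x assume "x \<in> (\<lambda>y. (vector [0, 1, 0] :: real^3) + (y$1 *\<^sub>R (vector [0, (-5/16), 0] :: real^3) + y$2 *\<^sub>R (vector [(5/24), (-5/24), (5/24)] :: real^3) + y$3 *\<^sub>R (vector [(-5/24), (-5/24), (5/24)] :: real^3))) ` stdH"
  then obtain y where y: "y \<in> stdH" "x = (\<lambda>y. (vector [0, 1, 0] :: real^3) + (y$1 *\<^sub>R (vector [0, (-5/16), 0] :: real^3) + y$2 *\<^sub>R (vector [(5/24), (-5/24), (5/24)] :: real^3) + y$3 *\<^sub>R (vector [(-5/24), (-5/24), (5/24)] :: real^3))) y" by blast
  then show "x \<in> C2" by (simp add: stdH_def C2_def; linarith)
qed

lemma C2_meas: "C2 \<in> lmeasurable" "measure lebesgue C2 = (125/27648)"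
  unfolding C2_img by (rule simplex_vol(1)) (simp add: simplex_vol(2) det3_def)

lemma C3_img: "C3 = (\<lambda>y. (vector [(1/2), (1/2), (1/2)] :: real^3) + (y$1 *\<^sub>R (vector [(-5/16), 0, 0] :: real^3) + y$2 *\<^sub>R (vector [(-5/24), (-5/24), (-5/24)] :: real^3) + y$3 *\<^sub>R (vector [(-5/24), (5/24), (-5/24)] :: real^3))) ` stdH"
proof (rule set_eqI, rule iffI)
  fix x assume "x \<in> C3"
  then have h: "0 \<le> x$1 + x$3 \<and> x$1 \<le> x$3 \<and> x$2 + x$3 \<le> 1 \<and> x$3 \<le> x$2 \<and> 7/16 \<le> x$1 + x$3/2" by (simp add: C3_def)
  show "x \<in> (\<lambda>y. (vector [(1/2), (1/2), (1/2)] :: real^3) + (y$1 *\<^sub>R (vector [(-5/16), 0, 0] :: real^3) + y$2 *\<^sub>R (vector [(-5/24), (-5/24), (-5/24)] :: real^3) + y$3 *\<^sub>R (vector [(-5/24), (5/24), (-5/24)] :: real^3))) ` stdH"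
  proof (rule image_eqI[where x="vector [((-16/5) * x$1 + (16/5) * x$3 + 0), ((-12/5) * x$2 + (-12/5) * x$3 + (12/5)), ((12/5) * x$2 + (-12/5) * x$3 + 0)] :: real^3"])
    show "x = (\<lambda>y. (vector [(1/2), (1/2), (1/2)] :: real^3) + (y$1 *\<^sub>R (vector [(-5/16), 0, 0] :: real^3) + y$2 *\<^sub>R (vector [(-5/24), (-5/24), (-5/24)] :: real^3) + y$3 *\<^sub>R (vector [(-5/24), (5/24), (-5/24)] :: real^3))) (vector [((-16/5) * x$1 + (16/5) * x$3 + 0), ((-12/5) * x$2 + (-12/5) * x$3 + (12/5)), ((12/5) * x$2 + (-12/5) * x$3 + 0)] :: real^3)"
      by (simp add: vec_eq_iff forall_3 algebra_simps)
    show "(vector [((-16/5) * x$1 + (16/5) * x$3 + 0), ((-12/5) * x$2 + (-12/5) * x$3 + (12/5)), ((12/5) * x$2 + (-12/5) * x$3 + 0)] :: real^3) \<in> stdH"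
      using h by (simp add: stdH_def; linarith)
  qed
next
  fix x assume "x \<in> (\<lambda>y. (vector [(1/2), (1/2), (1/2)] :: real^3) + (y$1 *\<^sub>R (vector [(-5/16), 0, 0] :: real^3) + y$2 *\<^sub>R (vector [(-5/24), (-5/24), (-5/24)] :: real^3) + y$3 *\<^sub>R (vector [(-5/24), (5/24), (-5/24)] :: real^3))) ` stdH"
  then obtain y where y: "y \<in> stdH" "x = (\<lambda>y. (vector [(1/2), (1/2), (1/2)] :: real^3) + (y$1 *\<^sub>R (vector [(-5/16), 0, 0] :: real^3) + y$2 *\<^sub>R (vector [(-5/24), (-5/24), (-5/24)] :: real^3) + y$3 *\<^sub>R (vector [(-5/24), (5/24), (-5/24)] :: real^3))) y" by blast
  then show "x \<in> C3" by (simp add: stdH_def C3_def; linarith)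
qed

lemma C3_meas: "C3 \<in> lmeasurable" "measure lebesgue C3 = (125/27648)"
  unfolding C3_img by (rule simplex_vol(1)) (simp add: simplex_vol(2) det3_def)

lemma C4_img: "C4 = (\<lambda>y. (vector [(-1/2), (1/2), (1/2)] :: real^3) + (y$1 *\<^sub>R (vector [(5/16), 0, 0] :: real^3) + y$2 *\<^sub>R (vector [(5/24), (-5/24), (-5/24)] :: real^3) + y$3 *\<^sub>R (vector [(5/24), (5/24), (-5/24)] :: real^3))) ` stdH"
proof (rule set_eqI, rule iffI)
  fix x assume "x \<in> C4"
  then have h: "0 \<le> x$1 + x$3 \<and> x$1 \<le> x$3 \<and> x$2 + x$3 \<le> 1 \<and> x$3 \<le> x$2 \<and> 7/16 \<le> - x$1 + x$3/2" by (simp add: C4_def)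
  show "x \<in> (\<lambda>y. (vector [(-1/2), (1/2), (1/2)] :: real^3) + (y$1 *\<^sub>R (vector [(5/16), 0, 0] :: real^3) + y$2 *\<^sub>R (vector [(5/24), (-5/24), (-5/24)] :: real^3) + y$3 *\<^sub>R (vector [(5/24), (5/24), (-5/24)] :: real^3))) ` stdH"
  proof (rule image_eqI[where x="vector [((16/5) * x$1 + (16/5) * x$3 + 0), ((-12/5) * x$2 + (-12/5) * x$3 + (12/5)), ((12/5) * x$2 + (-12/5) * x$3 + 0)] :: real^3"])
    show "x = (\<lambda>y. (vector [(-1/2), (1/2), (1/2)] :: real^3) + (y$1 *\<^sub>R (vector [(5/16), 0, 0] :: real^3) + y$2 *\<^sub>R (vector [(5/24), (-5/24), (-5/24)] :: real^3) + y$3 *\<^sub>R (vector [(5/24), (5/24), (-5/24)] :: real^3))) (vector [((16/5) * x$1 + (16/5) * x$3 + 0), ((-12/5) * x$2 + (-12/5) * x$3 + (12/5)), ((12/5) * x$2 + (-12/5) * x$3 + 0)] :: real^3)"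
      by (simp add: vec_eq_iff forall_3 algebra_simps)
    show "(vector [((16/5) * x$1 + (16/5) * x$3 + 0), ((-12/5) * x$2 + (-12/5) * x$3 + (12/5)), ((12/5) * x$2 + (-12/5) * x$3 + 0)] :: real^3) \<in> stdH"
      using h by (simp add: stdH_def; linarith)
  qed
next
  fix x assume "x \<in> (\<lambda>y. (vector [(-1/2), (1/2), (1/2)] :: real^3) + (y$1 *\<^sub>R (vector [(5/16), 0, 0] :: real^3) + y$2 *\<^sub>R (vector [(5/24), (-5/24), (-5/24)] :: real^3) + y$3 *\<^sub>R (vector [(5/24), (5/24), (-5/24)] :: real^3))) ` stdH"
  then obtain y where y: "y \<in> stdH" "x = (\<lambda>y. (vector [(-1/2), (1/2), (1/2)] :: real^3) + (y$1 *\<^sub>R (vector [(5/16), 0, 0] :: real^3) + y$2 *\<^sub>R (vector [(5/24), (-5/24), (-5/24)] :: real^3) + y$3 *\<^sub>R (vector [(5/24), (5/24), (-5/24)] :: real^3))) y" by blast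
  then show "x \<in> C4" by (simp add: stdH_def C4_def; linarith)
qed

lemma C4_meas: "C4 \<in> lmeasurable" "measure lebesgue C4 = (125/27648)"
  unfolding C4_img by (rule simplex_vol(1)) (simp add: simplex_vol(2) det3_def)

lemma mun: "S \<in> lmeasurable \<Longrightarrow> T \<in> lmeasurable \<Longrightarrow> negligible (S \<inter> T) \<Longrightarrow>
    measure lebesgue (S \<union> T) = measure lebesgue S + measure lebesgue T"
  by (simp add: measure_Un3 negligible_imp_measure0)

lemma plane_negl: "(a1, a2, a3) \<noteq> (0,0,0) \<Longrightarrow> negligible {x::real^3. a1 * x$1 + a2 * x$2 + a3 * x$3 = b}"
proof -
  assume "(a1, a2, a3) \<noteq> (0,0,0)"
  then have ne: "(vector [a1, a2, a3] :: real^3) \<noteq> 0" by (auto simp: vec_eq_iff forall_3)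
  have "{x::real^3. a1 * x$1 + a2 * x$2 + a3 * x$3 = b} = {x. (vector [a1, a2, a3] :: real^3) \<bullet> x = b}"
    by (simp add: inner_vec_def sum_3)
  then show ?thesis using negligible_hyperplane ne by metis
qed

lemma Pset_compact: "compact Pset"
proof -
  have "Pset \<subseteq> cbox (vector [-1,-1,-1]) (vector [1,1,1])"
    by (auto simp: Pset_def inP_def mem_box_cart forall_3)
  then have "bounded Pset" using bounded_cbox bounded_subset by blast
  moreover have "closed Pset" unfolding Pset_def inP_def
    by (intro closed_Collect_conj closed_Collect_le continuous_intros) auto
  ultimately show ?thesis by (simp add: compact_eq_bounded_closed)
qed

lemma Pset_meas: "Pset \<in> lmeasurable" "measure lebesgue Pset = 451/6912"
proof -
  show mP: "Pset \<in> lmeasurable" by (rule lmeasurable_compact[OF Pset_compact])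
  have u: "TB = Pset \<union> C1 \<union> C2 \<union> C3 \<union> C4"
    by (auto simp: TB_def Pset_def inP_def C1_def C2_def C3_def C4_def)
  have n1: "negligible (Pset \<inter> C1)"
    by (rule negligible_subset[OF plane_negl[of 0 1 "1/2" "5/16"]]) (auto simp: Pset_def inP_def C1_def)
  have n2: "negligible ((Pset \<union> C1) \<inter> C2)"
    by (rule negligible_subset[OF plane_negl[of 0 1 "-1/2" "11/16"]]) (auto simp: Pset_def inP_def C1_def C2_def)
  have n3: "negligible ((Pset \<union> C1 \<union> C2) \<inter> C3)"
    by (rule negligible_subset[OF plane_negl[of 1 0 "1/2" "7/16"]]) (auto simp: Pset_def inP_def C1_def C2_def C3_def)
  have n4: "negligible ((Pset \<union> C1 \<union> C2 \<union> C3) \<inter> C4)"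
    by (rule negligible_subset[OF plane_negl[of "-1" 0 "1/2" "7/16"]]) (auto simp: Pset_def inP_def C1_def C2_def C3_def C4_def)
  have "measure lebesgue TB = measure lebesgue Pset + measure lebesgue C1 + measure lebesgue C2
      + measure lebesgue C3 + measure lebesgue C4"
    unfolding u
    using mP C1_meas(1) C2_meas(1) C3_meas(1) C4_meas(1) n1 n2 n3 n4
    by (simp add: mun fmeasurable.Un)
  then show "measure lebesgue Pset = 451/6912"
    using TB_meas C1_meas C2_meas C3_meas C4_meas by simp
qed

definition isZ :: "real \<Rightarrow> bool" where "isZ r \<longleftrightarrow> r \<in> \<int>"
definition isH :: "real \<Rightarrow> bool" where "isH r \<longleftrightarrow> r - 1/2 \<in> \<int>"
definition isQ :: "real \<Rightarrow> bool" where "isQ r \<longleftrightarrow> 2 * r - 1/2 \<in> \<int>"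

definition D0 :: "real^3 \<Rightarrow> real" where
  "D0 x = (x$1 - 0)^2 + (x$2 - 1/2)^2 + (x$3 - 1/4)^2"

lemma isZ_E: assumes "isZ r" obtains n where "r = 0 + 1 * of_int n"
  using assms unfolding isZ_def by (auto elim: Ints_cases)

lemma isH_E: assumes "isH r" obtains n where "r = 1/2 + 1 * of_int n"
proof -
  from assms obtain n where "r - 1/2 = of_int n" unfolding isH_def by (auto elim: Ints_cases)
  then have "r = 1/2 + 1 * of_int n" by simp
  then show ?thesis by (rule that)
qed

lemma isQ_E: assumes "isQ r" obtains n where "r = 1/4 + 1/2 * of_int n"
proof -
  from assms obtain n where "2 * r - 1/2 = of_int n" unfolding isQ_def by (auto elim: Ints_cases)
  then have "r = 1/4 + 1/2 * of_int n" by simp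
  then show ?thesis by (rule that)
qed

lemma coord_red:
  fixes t c z :: real and nl nh n :: int
  assumes t: "0 < t" and lo: "c + t * of_int nl \<le> z" and hi: "z \<le> c + t * of_int nh"
  shows "\<exists>m. nl \<le> m \<and> m \<le> nh \<and> (z - (c + t * of_int m))^2 \<le> (z - (c + t * of_int n))^2"
proof (cases "n < nl")
  case True
  then have "t * of_int n \<le> t * of_int nl" using t by (intro mult_left_mono) auto
  then have a1: "0 \<le> z - (c + t * of_int nl)" and a2: "z - (c + t * of_int nl) \<le> z - (c + t * of_int n)"
    using lo by linarith+
  have "(z - (c + t * of_int nl))^2 \<le> (z - (c + t * of_int n))^2" by (rule power_mono[OF a2 a1])
  moreover have "nl \<le> nh"
  proof -
    have "c + t * of_int nl \<le> c + t * of_int nh" using lo hi by linarith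
    then have "of_int nl \<le> (of_int nh :: real)" using t by simp
    then show ?thesis by simp
  qed
  ultimately show ?thesis by auto
next
  case False
  show ?thesis
  proof (cases "nh < n")
    case True
    then have "t * of_int nh \<le> t * of_int n" using t by (intro mult_left_mono) auto
    then have a1: "0 \<le> (c + t * of_int nh) - z" and a2: "(c + t * of_int nh) - z \<le> (c + t * of_int n) - z"
      using hi by linarith+
    have "((c + t * of_int nh) - z)^2 \<le> ((c + t * of_int n) - z)^2" by (rule power_mono[OF a2 a1])
    then have "(z - (c + t * of_int nh))^2 \<le> (z - (c + t * of_int n))^2"
      by (simp add: power2_commute)
    moreover have "nl \<le> nh"
    proof -
      have "c + t * of_int nl \<le> c + t * of_int nh" using lo hi by linarith
      then have "of_int nl \<le> (of_int nh :: real)" using t by simp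
      then show ?thesis by simp
    qed
    ultimately show ?thesis by auto
  next
    case False
    with \<open>\<not> n < nl\<close> show ?thesis by (intro exI[of _ n]) auto
  qed
qed

lemma lin2sq:
  assumes "2 * (x$1 * a + x$2 * (b - 1/2) + x$3 * (c - 1/4)) \<le> a^2 + b^2 + c^2 - 5/16"
  shows "D0 x \<le> (x$1 - a)^2 + (x$2 - b)^2 + (x$3 - c)^2"
proof -
  have "(x$1 - a)^2 + (x$2 - b)^2 + (x$3 - c)^2 - D0 x = a^2 + b^2 + c^2 - 5/16 - 2 * (x$1 * a + x$2 * (b - 1/2) + x$3 * (c - 1/4))"
    unfolding D0_def by (simp add: power2_eq_square algebra_simps)
  then show ?thesis using assms by linarith
qed

lemma ty_ZZZ:
  assumes P: "inP x" and q: "isZ (q$1)" "isZ (q$2)" "isZ (q$3)"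
  shows "D0 x \<le> (x$1 - q$1)^2 + (x$2 - q$2)^2 + (x$3 - q$3)^2"
proof -
  have b: "-7/24 \<le> x$1" "x$1 \<le> 7/24" "5/24 \<le> x$2" "x$2 \<le> 19/24" "0 \<le> x$3" "x$3 \<le> 1/2"
    using P unfolding inP_def by linarith+
  obtain n1 where n1: "q$1 = 0 + 1 * of_int n1" using q(1) by (rule isZ_E)
  obtain m1 where m1: "-1 \<le> m1" "m1 \<le> 1" "(x$1 - (0 + 1 * of_int m1))^2 \<le> (x$1 - (0 + 1 * of_int n1))^2"
    using coord_red[where t="1" and c="0" and nl="-1" and z="x$1" and nh="1" and n=n1] b by auto
  obtain n2 where n2: "q$2 = 0 + 1 * of_int n2" using q(2) by (rule isZ_E)
  obtain m2 where m2: "0 \<le> m2" "m2 \<le> 1" "(x$2 - (0 + 1 * of_int m2))^2 \<le> (x$2 - (0 + 1 * of_int n2))^2"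
    using coord_red[where t="1" and c="0" and nl="0" and z="x$2" and nh="1" and n=n2] b by auto
  obtain n3 where n3: "q$3 = 0 + 1 * of_int n3" using q(3) by (rule isZ_E)
  obtain m3 where m3: "0 \<le> m3" "m3 \<le> 1" "(x$3 - (0 + 1 * of_int m3))^2 \<le> (x$3 - (0 + 1 * of_int n3))^2"
    using coord_red[where t="1" and c="0" and nl="0" and z="x$3" and nh="1" and n=n3] b by auto
  have "D0 x \<le> (x$1 - (0 + 1 * of_int m1))^2 + (x$2 - (0 + 1 * of_int m2))^2 + (x$3 - (0 + 1 * of_int m3))^2"
  proof (rule lin2sq)
    have c1: "m1 = -1 \<or> m1 = 0 \<or> m1 = 1" using m1 by auto
    have c2: "m2 = 0 \<or> m2 = 1" using m2 by auto
    have c3: "m3 = 0 \<or> m3 = 1" using m3 by auto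
    show "2 * (x$1 * (0 + 1 * of_int m1) + x$2 * ((0 + 1 * of_int m2) - 1/2) + x$3 * ((0 + 1 * of_int m3) - 1/4)) \<le> (0 + 1 * of_int m1)^2 + (0 + 1 * of_int m2)^2 + (0 + 1 * of_int m3)^2 - 5/16"
      using c1 c2 c3 P[unfolded inP_def] apply (elim disjE conjE) apply (simp_all add: power2_eq_square) done
  qed
  then show ?thesis unfolding n1 n2 n3 using m1(3) m2(3) m3(3) by linarith
qed

lemma ty_HHH:
  assumes P: "inP x" and q: "isH (q$1)" "isH (q$2)" "isH (q$3)"
  shows "D0 x \<le> (x$1 - q$1)^2 + (x$2 - q$2)^2 + (x$3 - q$3)^2"
proof -
  have b: "-7/24 \<le> x$1" "x$1 \<le> 7/24" "5/24 \<le> x$2" "x$2 \<le> 19/24" "0 \<le> x$3" "x$3 \<le> 1/2"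
    using P unfolding inP_def by linarith+
  obtain n1 where n1: "q$1 = 1/2 + 1 * of_int n1" using q(1) by (rule isH_E)
  obtain m1 where m1: "-1 \<le> m1" "m1 \<le> 0" "(x$1 - (1/2 + 1 * of_int m1))^2 \<le> (x$1 - (1/2 + 1 * of_int n1))^2"
    using coord_red[where t="1" and c="1/2" and nl="-1" and z="x$1" and nh="0" and n=n1] b by auto
  obtain n2 where n2: "q$2 = 1/2 + 1 * of_int n2" using q(2) by (rule isH_E)
  obtain m2 where m2: "-1 \<le> m2" "m2 \<le> 1" "(x$2 - (1/2 + 1 * of_int m2))^2 \<le> (x$2 - (1/2 + 1 * of_int n2))^2"
    using coord_red[where t="1" and c="1/2" and nl="-1" and z="x$2" and nh="1" and n=n2] b by auto
  obtain n3 where n3: "q$3 = 1/2 + 1 * of_int n3" using q(3) by (rule isH_E)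
  obtain m3 where m3: "-1 \<le> m3" "m3 \<le> 0" "(x$3 - (1/2 + 1 * of_int m3))^2 \<le> (x$3 - (1/2 + 1 * of_int n3))^2"
    using coord_red[where t="1" and c="1/2" and nl="-1" and z="x$3" and nh="0" and n=n3] b by auto
  have "D0 x \<le> (x$1 - (1/2 + 1 * of_int m1))^2 + (x$2 - (1/2 + 1 * of_int m2))^2 + (x$3 - (1/2 + 1 * of_int m3))^2"
  proof (rule lin2sq)
    have c1: "m1 = -1 \<or> m1 = 0" using m1 by auto
    have c2: "m2 = -1 \<or> m2 = 0 \<or> m2 = 1" using m2 by auto
    have c3: "m3 = -1 \<or> m3 = 0" using m3 by auto
    show "2 * (x$1 * (1/2 + 1 * of_int m1) + x$2 * ((1/2 + 1 * of_int m2) - 1/2) + x$3 * ((1/2 + 1 * of_int m3) - 1/4)) \<le> (1/2 + 1 * of_int m1)^2 + (1/2 + 1 * of_int m2)^2 + (1/2 + 1 * of_int m3)^2 - 5/16"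
      using c1 c2 c3 P[unfolded inP_def] apply (elim disjE conjE) apply (simp_all add: power2_eq_square) done
  qed
  then show ?thesis unfolding n1 n2 n3 using m1(3) m2(3) m3(3) by linarith
qed

lemma ty_ZHQ:
  assumes P: "inP x" and q: "isZ (q$1)" "isH (q$2)" "isQ (q$3)"
  shows "D0 x \<le> (x$1 - q$1)^2 + (x$2 - q$2)^2 + (x$3 - q$3)^2"
proof -
  have b: "-7/24 \<le> x$1" "x$1 \<le> 7/24" "5/24 \<le> x$2" "x$2 \<le> 19/24" "0 \<le> x$3" "x$3 \<le> 1/2"
    using P unfolding inP_def by linarith+
  obtain n1 where n1: "q$1 = 0 + 1 * of_int n1" using q(1) by (rule isZ_E)
  obtain m1 where m1: "-1 \<le> m1" "m1 \<le> 1" "(x$1 - (0 + 1 * of_int m1))^2 \<le> (x$1 - (0 + 1 * of_int n1))^2"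
    using coord_red[where t="1" and c="0" and nl="-1" and z="x$1" and nh="1" and n=n1] b by auto
  obtain n2 where n2: "q$2 = 1/2 + 1 * of_int n2" using q(2) by (rule isH_E)
  obtain m2 where m2: "-1 \<le> m2" "m2 \<le> 1" "(x$2 - (1/2 + 1 * of_int m2))^2 \<le> (x$2 - (1/2 + 1 * of_int n2))^2"
    using coord_red[where t="1" and c="1/2" and nl="-1" and z="x$2" and nh="1" and n=n2] b by auto
  obtain n3 where n3: "q$3 = 1/4 + 1/2 * of_int n3" using q(3) by (rule isQ_E)
  obtain m3 where m3: "-1 \<le> m3" "m3 \<le> 1" "(x$3 - (1/4 + 1/2 * of_int m3))^2 \<le> (x$3 - (1/4 + 1/2 * of_int n3))^2"
    using coord_red[where t="1/2" and c="1/4" and nl="-1" and z="x$3" and nh="1" and n=n3] b by auto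
  have "D0 x \<le> (x$1 - (0 + 1 * of_int m1))^2 + (x$2 - (1/2 + 1 * of_int m2))^2 + (x$3 - (1/4 + 1/2 * of_int m3))^2"
  proof (rule lin2sq)
    have c1: "m1 = -1 \<or> m1 = 0 \<or> m1 = 1" using m1 by auto
    have c2: "m2 = -1 \<or> m2 = 0 \<or> m2 = 1" using m2 by auto
    have c3: "m3 = -1 \<or> m3 = 0 \<or> m3 = 1" using m3 by auto
    show "2 * (x$1 * (0 + 1 * of_int m1) + x$2 * ((1/2 + 1 * of_int m2) - 1/2) + x$3 * ((1/4 + 1/2 * of_int m3) - 1/4)) \<le> (0 + 1 * of_int m1)^2 + (1/2 + 1 * of_int m2)^2 + (1/4 + 1/2 * of_int m3)^2 - 5/16"
      using c1 c2 c3 P[unfolded inP_def] apply (elim disjE conjE) apply (simp_all add: power2_eq_square) done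
  qed
  then show ?thesis unfolding n1 n2 n3 using m1(3) m2(3) m3(3) by linarith
qed

lemma ty_ZQH:
  assumes P: "inP x" and q: "isZ (q$1)" "isQ (q$2)" "isH (q$3)"
  shows "D0 x \<le> (x$1 - q$1)^2 + (x$2 - q$2)^2 + (x$3 - q$3)^2"
proof -
  have b: "-7/24 \<le> x$1" "x$1 \<le> 7/24" "5/24 \<le> x$2" "x$2 \<le> 19/24" "0 \<le> x$3" "x$3 \<le> 1/2"
    using P unfolding inP_def by linarith+
  obtain n1 where n1: "q$1 = 0 + 1 * of_int n1" using q(1) by (rule isZ_E)
  obtain m1 where m1: "-1 \<le> m1" "m1 \<le> 1" "(x$1 - (0 + 1 * of_int m1))^2 \<le> (x$1 - (0 + 1 * of_int n1))^2"
    using coord_red[where t="1" and c="0" and nl="-1" and z="x$1" and nh="1" and n=n1] b by auto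
  obtain n2 where n2: "q$2 = 1/4 + 1/2 * of_int n2" using q(2) by (rule isQ_E)
  obtain m2 where m2: "-1 \<le> m2" "m2 \<le> 2" "(x$2 - (1/4 + 1/2 * of_int m2))^2 \<le> (x$2 - (1/4 + 1/2 * of_int n2))^2"
    using coord_red[where t="1/2" and c="1/4" and nl="-1" and z="x$2" and nh="2" and n=n2] b by auto
  obtain n3 where n3: "q$3 = 1/2 + 1 * of_int n3" using q(3) by (rule isH_E)
  obtain m3 where m3: "-1 \<le> m3" "m3 \<le> 0" "(x$3 - (1/2 + 1 * of_int m3))^2 \<le> (x$3 - (1/2 + 1 * of_int n3))^2"
    using coord_red[where t="1" and c="1/2" and nl="-1" and z="x$3" and nh="0" and n=n3] b by auto
  have "D0 x \<le> (x$1 - (0 + 1 * of_int m1))^2 + (x$2 - (1/4 + 1/2 * of_int m2))^2 + (x$3 - (1/2 + 1 * of_int m3))^2"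
  proof (rule lin2sq)
    have c1: "m1 = -1 \<or> m1 = 0 \<or> m1 = 1" using m1 by auto
    have c2: "m2 = -1 \<or> m2 = 0 \<or> m2 = 1 \<or> m2 = 2" using m2 by auto
    have c3: "m3 = -1 \<or> m3 = 0" using m3 by auto
    show "2 * (x$1 * (0 + 1 * of_int m1) + x$2 * ((1/4 + 1/2 * of_int m2) - 1/2) + x$3 * ((1/2 + 1 * of_int m3) - 1/4)) \<le> (0 + 1 * of_int m1)^2 + (1/4 + 1/2 * of_int m2)^2 + (1/2 + 1 * of_int m3)^2 - 5/16"
      using c1 c2 c3 P[unfolded inP_def] apply (elim disjE conjE) apply (simp_all add: power2_eq_square) done
  qed
  then show ?thesis unfolding n1 n2 n3 using m1(3) m2(3) m3(3) by linarith
qed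

lemma ty_HZQ:
  assumes P: "inP x" and q: "isH (q$1)" "isZ (q$2)" "isQ (q$3)"
  shows "D0 x \<le> (x$1 - q$1)^2 + (x$2 - q$2)^2 + (x$3 - q$3)^2"
proof -
  have b: "-7/24 \<le> x$1" "x$1 \<le> 7/24" "5/24 \<le> x$2" "x$2 \<le> 19/24" "0 \<le> x$3" "x$3 \<le> 1/2"
    using P unfolding inP_def by linarith+
  obtain n1 where n1: "q$1 = 1/2 + 1 * of_int n1" using q(1) by (rule isH_E)
  obtain m1 where m1: "-1 \<le> m1" "m1 \<le> 0" "(x$1 - (1/2 + 1 * of_int m1))^2 \<le> (x$1 - (1/2 + 1 * of_int n1))^2"
    using coord_red[where t="1" and c="1/2" and nl="-1" and z="x$1" and nh="0" and n=n1] b by auto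
  obtain n2 where n2: "q$2 = 0 + 1 * of_int n2" using q(2) by (rule isZ_E)
  obtain m2 where m2: "0 \<le> m2" "m2 \<le> 1" "(x$2 - (0 + 1 * of_int m2))^2 \<le> (x$2 - (0 + 1 * of_int n2))^2"
    using coord_red[where t="1" and c="0" and nl="0" and z="x$2" and nh="1" and n=n2] b by auto
  obtain n3 where n3: "q$3 = 1/4 + 1/2 * of_int n3" using q(3) by (rule isQ_E)
  obtain m3 where m3: "-1 \<le> m3" "m3 \<le> 1" "(x$3 - (1/4 + 1/2 * of_int m3))^2 \<le> (x$3 - (1/4 + 1/2 * of_int n3))^2"
    using coord_red[where t="1/2" and c="1/4" and nl="-1" and z="x$3" and nh="1" and n=n3] b by auto
  have "D0 x \<le> (x$1 - (1/2 + 1 * of_int m1))^2 + (x$2 - (0 + 1 * of_int m2))^2 + (x$3 - (1/4 + 1/2 * of_int m3))^2"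
  proof (rule lin2sq)
    have c1: "m1 = -1 \<or> m1 = 0" using m1 by auto
    have c2: "m2 = 0 \<or> m2 = 1" using m2 by auto
    have c3: "m3 = -1 \<or> m3 = 0 \<or> m3 = 1" using m3 by auto
    show "2 * (x$1 * (1/2 + 1 * of_int m1) + x$2 * ((0 + 1 * of_int m2) - 1/2) + x$3 * ((1/4 + 1/2 * of_int m3) - 1/4)) \<le> (1/2 + 1 * of_int m1)^2 + (0 + 1 * of_int m2)^2 + (1/4 + 1/2 * of_int m3)^2 - 5/16"
      using c1 c2 c3 P[unfolded inP_def] apply (elim disjE conjE) apply (simp_all add: power2_eq_square) done
  qed
  then show ?thesis unfolding n1 n2 n3 using m1(3) m2(3) m3(3) by linarith
qed

lemma ty_HQZ:
  assumes P: "inP x" and q: "isH (q$1)" "isQ (q$2)" "isZ (q$3)"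
  shows "D0 x \<le> (x$1 - q$1)^2 + (x$2 - q$2)^2 + (x$3 - q$3)^2"
proof -
  have b: "-7/24 \<le> x$1" "x$1 \<le> 7/24" "5/24 \<le> x$2" "x$2 \<le> 19/24" "0 \<le> x$3" "x$3 \<le> 1/2"
    using P unfolding inP_def by linarith+
  obtain n1 where n1: "q$1 = 1/2 + 1 * of_int n1" using q(1) by (rule isH_E)
  obtain m1 where m1: "-1 \<le> m1" "m1 \<le> 0" "(x$1 - (1/2 + 1 * of_int m1))^2 \<le> (x$1 - (1/2 + 1 * of_int n1))^2"
    using coord_red[where t="1" and c="1/2" and nl="-1" and z="x$1" and nh="0" and n=n1] b by auto
  obtain n2 where n2: "q$2 = 1/4 + 1/2 * of_int n2" using q(2) by (rule isQ_E)
  obtain m2 where m2: "-1 \<le> m2" "m2 \<le> 2" "(x$2 - (1/4 + 1/2 * of_int m2))^2 \<le> (x$2 - (1/4 + 1/2 * of_int n2))^2"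
    using coord_red[where t="1/2" and c="1/4" and nl="-1" and z="x$2" and nh="2" and n=n2] b by auto
  obtain n3 where n3: "q$3 = 0 + 1 * of_int n3" using q(3) by (rule isZ_E)
  obtain m3 where m3: "0 \<le> m3" "m3 \<le> 1" "(x$3 - (0 + 1 * of_int m3))^2 \<le> (x$3 - (0 + 1 * of_int n3))^2"
    using coord_red[where t="1" and c="0" and nl="0" and z="x$3" and nh="1" and n=n3] b by auto
  have "D0 x \<le> (x$1 - (1/2 + 1 * of_int m1))^2 + (x$2 - (1/4 + 1/2 * of_int m2))^2 + (x$3 - (0 + 1 * of_int m3))^2"
  proof (rule lin2sq)
    have c1: "m1 = -1 \<or> m1 = 0" using m1 by auto
    have c2: "m2 = -1 \<or> m2 = 0 \<or> m2 = 1 \<or> m2 = 2" using m2 by auto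
    have c3: "m3 = 0 \<or> m3 = 1" using m3 by auto
    show "2 * (x$1 * (1/2 + 1 * of_int m1) + x$2 * ((1/4 + 1/2 * of_int m2) - 1/2) + x$3 * ((0 + 1 * of_int m3) - 1/4)) \<le> (1/2 + 1 * of_int m1)^2 + (1/4 + 1/2 * of_int m2)^2 + (0 + 1 * of_int m3)^2 - 5/16"
      using c1 c2 c3 P[unfolded inP_def] apply (elim disjE conjE) apply (simp_all add: power2_eq_square) done
  qed
  then show ?thesis unfolding n1 n2 n3 using m1(3) m2(3) m3(3) by linarith
qed

lemma ty_QZH:
  assumes P: "inP x" and q: "isQ (q$1)" "isZ (q$2)" "isH (q$3)"
  shows "D0 x \<le> (x$1 - q$1)^2 + (x$2 - q$2)^2 + (x$3 - q$3)^2"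
proof -
  have b: "-7/24 \<le> x$1" "x$1 \<le> 7/24" "5/24 \<le> x$2" "x$2 \<le> 19/24" "0 \<le> x$3" "x$3 \<le> 1/2"
    using P unfolding inP_def by linarith+
  obtain n1 where n1: "q$1 = 1/4 + 1/2 * of_int n1" using q(1) by (rule isQ_E)
  obtain m1 where m1: "-2 \<le> m1" "m1 \<le> 1" "(x$1 - (1/4 + 1/2 * of_int m1))^2 \<le> (x$1 - (1/4 + 1/2 * of_int n1))^2"
    using coord_red[where t="1/2" and c="1/4" and nl="-2" and z="x$1" and nh="1" and n=n1] b by auto
  obtain n2 where n2: "q$2 = 0 + 1 * of_int n2" using q(2) by (rule isZ_E)
  obtain m2 where m2: "0 \<le> m2" "m2 \<le> 1" "(x$2 - (0 + 1 * of_int m2))^2 \<le> (x$2 - (0 + 1 * of_int n2))^2"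
    using coord_red[where t="1" and c="0" and nl="0" and z="x$2" and nh="1" and n=n2] b by auto
  obtain n3 where n3: "q$3 = 1/2 + 1 * of_int n3" using q(3) by (rule isH_E)
  obtain m3 where m3: "-1 \<le> m3" "m3 \<le> 0" "(x$3 - (1/2 + 1 * of_int m3))^2 \<le> (x$3 - (1/2 + 1 * of_int n3))^2"
    using coord_red[where t="1" and c="1/2" and nl="-1" and z="x$3" and nh="0" and n=n3] b by auto
  have "D0 x \<le> (x$1 - (1/4 + 1/2 * of_int m1))^2 + (x$2 - (0 + 1 * of_int m2))^2 + (x$3 - (1/2 + 1 * of_int m3))^2"
  proof (rule lin2sq)
    have c1: "m1 = -2 \<or> m1 = -1 \<or> m1 = 0 \<or> m1 = 1" using m1 by auto
    have c2: "m2 = 0 \<or> m2 = 1" using m2 by auto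
    have c3: "m3 = -1 \<or> m3 = 0" using m3 by auto
    show "2 * (x$1 * (1/4 + 1/2 * of_int m1) + x$2 * ((0 + 1 * of_int m2) - 1/2) + x$3 * ((1/2 + 1 * of_int m3) - 1/4)) \<le> (1/4 + 1/2 * of_int m1)^2 + (0 + 1 * of_int m2)^2 + (1/2 + 1 * of_int m3)^2 - 5/16"
      using c1 c2 c3 P[unfolded inP_def] apply (elim disjE conjE) apply (simp_all add: power2_eq_square) done
  qed
  then show ?thesis unfolding n1 n2 n3 using m1(3) m2(3) m3(3) by linarith
qed

lemma ty_QHZ:
  assumes P: "inP x" and q: "isQ (q$1)" "isH (q$2)" "isZ (q$3)"
  shows "D0 x \<le> (x$1 - q$1)^2 + (x$2 - q$2)^2 + (x$3 - q$3)^2"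
proof -
  have b: "-7/24 \<le> x$1" "x$1 \<le> 7/24" "5/24 \<le> x$2" "x$2 \<le> 19/24" "0 \<le> x$3" "x$3 \<le> 1/2"
    using P unfolding inP_def by linarith+
  obtain n1 where n1: "q$1 = 1/4 + 1/2 * of_int n1" using q(1) by (rule isQ_E)
  obtain m1 where m1: "-2 \<le> m1" "m1 \<le> 1" "(x$1 - (1/4 + 1/2 * of_int m1))^2 \<le> (x$1 - (1/4 + 1/2 * of_int n1))^2"
    using coord_red[where t="1/2" and c="1/4" and nl="-2" and z="x$1" and nh="1" and n=n1] b by auto
  obtain n2 where n2: "q$2 = 1/2 + 1 * of_int n2" using q(2) by (rule isH_E)
  obtain m2 where m2: "-1 \<le> m2" "m2 \<le> 1" "(x$2 - (1/2 + 1 * of_int m2))^2 \<le> (x$2 - (1/2 + 1 * of_int n2))^2"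
    using coord_red[where t="1" and c="1/2" and nl="-1" and z="x$2" and nh="1" and n=n2] b by auto
  obtain n3 where n3: "q$3 = 0 + 1 * of_int n3" using q(3) by (rule isZ_E)
  obtain m3 where m3: "0 \<le> m3" "m3 \<le> 1" "(x$3 - (0 + 1 * of_int m3))^2 \<le> (x$3 - (0 + 1 * of_int n3))^2"
    using coord_red[where t="1" and c="0" and nl="0" and z="x$3" and nh="1" and n=n3] b by auto
  have "D0 x \<le> (x$1 - (1/4 + 1/2 * of_int m1))^2 + (x$2 - (1/2 + 1 * of_int m2))^2 + (x$3 - (0 + 1 * of_int m3))^2"
  proof (rule lin2sq)
    have c1: "m1 = -2 \<or> m1 = -1 \<or> m1 = 0 \<or> m1 = 1" using m1 by auto
    have c2: "m2 = -1 \<or> m2 = 0 \<or> m2 = 1" using m2 by auto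
    have c3: "m3 = 0 \<or> m3 = 1" using m3 by auto
    show "2 * (x$1 * (1/4 + 1/2 * of_int m1) + x$2 * ((1/2 + 1 * of_int m2) - 1/2) + x$3 * ((0 + 1 * of_int m3) - 1/4)) \<le> (1/4 + 1/2 * of_int m1)^2 + (1/2 + 1 * of_int m2)^2 + (0 + 1 * of_int m3)^2 - 5/16"
      using c1 c2 c3 P[unfolded inP_def] apply (elim disjE conjE) apply (simp_all add: power2_eq_square) done
  qed
  then show ?thesis unfolding n1 n2 n3 using m1(3) m2(3) m3(3) by linarith
qed

definition Cl :: "real^3 \<Rightarrow> bool" where
  "Cl z \<longleftrightarrow> (\<forall>m. isZ (z$m)) \<or> (\<forall>m. isH (z$m)) \<or>
     (\<exists>m1 m2 m3. m1 \<noteq> m2 \<and> m1 \<noteq> m3 \<and> m2 \<noteq> m3 \<and> isZ (z$m1) \<and> isH (z$m2) \<and> isQ (z$m3))"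

definition w0 :: "real^3" where "w0 = vector [0, 1/2, 1/4]"

lemma key:
  assumes P: "inP x" and C: "Cl q"
  shows "D0 x \<le> (x$1 - q$1)^2 + (x$2 - q$2)^2 + (x$3 - q$3)^2"
  using C unfolding Cl_def
proof (elim disjE exE conjE)
  assume "\<forall>m. isZ (q$m)" then show ?thesis using ty_ZZZ[OF P] by blast
next
  assume "\<forall>m. isH (q$m)" then show ?thesis using ty_HHH[OF P] by blast
next
  fix m1 m2 m3 :: 3
  assume d: "m1 \<noteq> m2" "m1 \<noteq> m3" "m2 \<noteq> m3" and h: "isZ (q$m1)" "isH (q$m2)" "isQ (q$m3)"
  have "m1 = 1 \<or> m1 = 2 \<or> m1 = 3" "m2 = 1 \<or> m2 = 2 \<or> m2 = 3" "m3 = 1 \<or> m3 = 2 \<or> m3 = 3"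
    using exhaust_3 by blast+
  then show ?thesis using d h
    apply (elim disjE)
    apply simp_all
    using ty_ZHQ[OF P] ty_ZQH[OF P] ty_HZQ[OF P] ty_HQZ[OF P] ty_QZH[OF P] ty_QHZ[OF P] by blast+
qed

lemma dist3: "dist (x::real^3) y = sqrt ((x$1 - y$1)^2 + (x$2 - y$2)^2 + (x$3 - y$3)^2)"
  by (simp add: dist_vec_def L2_Norm.L2_set_def sum_3 dist_real_def)

lemma dist_le3: "dist (x::real^3) y \<le> dist x z \<longleftrightarrow>
   (x$1 - y$1)^2 + (x$2 - y$2)^2 + (x$3 - y$3)^2 \<le> (x$1 - z$1)^2 + (x$2 - z$2)^2 + (x$3 - z$3)^2"
  unfolding dist3 by simp

lemma D0_w0: "D0 x = (x$1 - w0$1)^2 + (x$2 - w0$2)^2 + (x$3 - w0$3)^2"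
  by (simp add: D0_def w0_def)

lemma sq2lin:
  assumes "D0 x \<le> (x$1 - a)^2 + (x$2 - b)^2 + (x$3 - c)^2"
  shows "2 * (x$1 * a + x$2 * (b - 1/2) + x$3 * (c - 1/4)) \<le> a^2 + b^2 + c^2 - 5/16"
proof -
  have "(x$1 - a)^2 + (x$2 - b)^2 + (x$3 - c)^2 - D0 x = a^2 + b^2 + c^2 - 5/16 - 2 * (x$1 * a + x$2 * (b - 1/2) + x$3 * (c - 1/4))"
    unfolding D0_def by (simp add: power2_eq_square algebra_simps)
  then show ?thesis using assms by linarith
qed

definition Cell1 :: "(real^3) set" where
  "Cell1 = {y. \<forall>y'. Cl y' \<longrightarrow> dist y w0 \<le> dist y y'}"

lemma nbr_lin:
  assumes "y \<in> Cell1" "Cl (vector [a, b, c])"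
  shows "2 * (y$1 * a + y$2 * (b - 1/2) + y$3 * (c - 1/4)) \<le> a^2 + b^2 + c^2 - 5/16"
proof -
  have "dist y w0 \<le> dist y (vector [a, b, c])" using assms unfolding Cell1_def by blast
  then have "D0 y \<le> (y$1 - a)^2 + (y$2 - b)^2 + (y$3 - c)^2"
    unfolding dist_le3 D0_w0 by simp
  then show ?thesis by (rule sq2lin)
qed

lemma Cell1_eq: "Cell1 = Pset"
proof (rule set_eqI, rule iffI)
  fix y assume y: "y \<in> Cell1"
  have c1: "Cl (vector [-1/4, 1/2, 0])" unfolding Cl_def
    by (rule disjI2, rule disjI2, rule exI[of _ 3], rule exI[of _ 2], rule exI[of _ 1]) (simp add: isZ_def isH_def isQ_def)
  have c2: "Cl (vector [1/4, 1/2, 0])" unfolding Cl_def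
    by (rule disjI2, rule disjI2, rule exI[of _ 3], rule exI[of _ 2], rule exI[of _ 1]) (simp add: isZ_def isH_def isQ_def)
  have c3: "Cl (vector [0, 3/4, 1/2])" unfolding Cl_def
    by (rule disjI2, rule disjI2, rule exI[of _ 1], rule exI[of _ 3], rule exI[of _ 2]) (simp add: isZ_def isH_def isQ_def)
  have c4: "Cl (vector [0, 1/4, 1/2])" unfolding Cl_def
    by (rule disjI2, rule disjI2, rule exI[of _ 1], rule exI[of _ 3], rule exI[of _ 2]) (simp add: isZ_def isH_def isQ_def)
  have c5: "Cl (vector [0, 0, 0])" unfolding Cl_def
    by (rule disjI1) (simp add: isZ_def forall_3)
  have c6: "Cl (vector [0, 1, 0])" unfolding Cl_def
    by (rule disjI1) (simp add: isZ_def forall_3)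
  have c7: "Cl (vector [1/2, 1/2, 1/2])" unfolding Cl_def
    by (rule disjI2, rule disjI1) (simp add: isH_def forall_3)
  have c8: "Cl (vector [-1/2, 1/2, 1/2])" unfolding Cl_def
    by (rule disjI2, rule disjI1) (simp add: isH_def forall_3)
  note l = nbr_lin[OF y c1] nbr_lin[OF y c2] nbr_lin[OF y c3] nbr_lin[OF y c4]
     nbr_lin[OF y c5] nbr_lin[OF y c6] nbr_lin[OF y c7] nbr_lin[OF y c8]
  show "y \<in> Pset" using l unfolding Pset_def inP_def by (simp add: power2_eq_square)
next
  fix y assume "y \<in> Pset"
  then have P: "inP y" by (simp add: Pset_def)
  show "y \<in> Cell1" unfolding Cell1_def
  proof (intro CollectI allI impI)
    fix y' assume "Cl y'"
    from key[OF P this] show "dist y w0 \<le> dist y y'" unfolding dist_le3 D0_w0 .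
  qed
qed

lemma three_cases:
  assumes "m1 \<noteq> m2" "m1 \<noteq> m3" "m2 \<noteq> m3"
  shows "(m::3) = m1 \<or> m = m2 \<or> m = m3"
proof -
  have "m = 1 \<or> m = 2 \<or> m = 3" "m1 = 1 \<or> m1 = 2 \<or> m1 = 3" "m2 = 1 \<or> m2 = 2 \<or> m2 = 3"
    "m3 = 1 \<or> m3 = 2 \<or> m3 = 3" by (rule exhaust_3)+
  then show ?thesis using assms by (elim disjE) simp_all
qed

lemma perm3:
  assumes "m1 \<noteq> m2" "m1 \<noteq> m3" "m2 \<noteq> m3"
  shows "(\<lambda>m::3. if m = m1 then 1 else if m = m2 then 2 else (3::3)) permutes UNIV"
proof -
  have e: "\<And>m::3. m = m1 \<or> m = m2 \<or> m = m3"
    using three_cases[OF assms] by blast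
  have n: "(1::3) \<noteq> 2" "(1::3) \<noteq> 3" "(2::3) \<noteq> 3" by simp_all
  show ?thesis unfolding permutes_univ
  proof
    fix y :: 3
    have "y = 1 \<or> y = 2 \<or> y = 3" by (rule exhaust_3)
    then show "\<exists>!x. (if x = m1 then 1 else if x = m2 then 2 else 3) = y"
    proof (elim disjE)
      assume "y = 1" then show ?thesis using assms n by (intro ex1I[of _ m1]) (auto split: if_splits)
    next
      assume "y = 2" then show ?thesis using assms n by (intro ex1I[of _ m2]) (auto split: if_splits)
    next
      assume "y = 3" then show ?thesis using assms n e by (intro ex1I[of _ m3]) (auto split: if_splits)
    qed
  qed
qed

lemma isH_half: "isH (of_int j + 1/2)" by (simp add: isH_def)

lemma W_char:
  assumes "a > 0"
  shows "q \<in> W_set a \<longleftrightarrow> (\<exists>m1 m2 m3. m1 \<noteq> m2 \<and> m1 \<noteq> m3 \<and> m2 \<noteq> m3 \<and>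
     isZ ((inverse a *\<^sub>R q)$m1) \<and> isH ((inverse a *\<^sub>R q)$m2) \<and> isQ ((inverse a *\<^sub>R q)$m3))"
  (is "_ \<longleftrightarrow> ?R")
proof
  assume "q \<in> W_set a"
  then obtain t p where tp: "t \<in> W_triples" "p permutes (UNIV :: 3 set)" "q = a *\<^sub>R (\<chi> i. t $ p i)"
    unfolding W_set_def by blast
  from tp(1) obtain i j k e where t: "t = vector [of_int i, of_int j + 1/2, of_int k + e]" and e: "e \<in> {1/4, 3/4 :: real}"
    unfolding W_triples_def by blast
  have z: "inverse a *\<^sub>R q = (\<chi> i. t $ p i)" unfolding tp(3) using assms by simp
  have pi: "\<And>x. p (inv p x) = x" using permutes_inverses(1)[OF tp(2)] by blast
  have ip: "inj (inv p)" using permutes_inj[OF permutes_inv[OF tp(2)]] .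
  have d: "inv p 1 \<noteq> inv p 2" "inv p 1 \<noteq> inv p 3" "inv p 2 \<noteq> inv p (3::3)"
    using ip by (simp_all add: inj_eq)
  have q3: "isQ (of_int k + e)" using e
  proof
    assume "e = 1/4"
    then have "2 * (of_int k + e) - 1/2 = of_int (2 * k)" by (simp add: algebra_simps)
    then show ?thesis unfolding isQ_def by (metis Ints_of_int)
  next
    assume "e \<in> {3/4}"
    then have "2 * (of_int k + e) - 1/2 = of_int (2 * k + 1)" by (simp add: algebra_simps)
    then show ?thesis unfolding isQ_def by (metis Ints_of_int)
  qed
  have c1: "(inverse a *\<^sub>R q)$(inv p 1) = of_int i" unfolding z by (simp add: pi t)
  have c2: "(inverse a *\<^sub>R q)$(inv p 2) = of_int j + 1/2" unfolding z by (simp add: pi t)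
  have c3: "(inverse a *\<^sub>R q)$(inv p 3) = of_int k + e" unfolding z by (simp add: pi t)
  have "isZ ((inverse a *\<^sub>R q)$(inv p 1))" unfolding c1 isZ_def by simp
  moreover have "isH ((inverse a *\<^sub>R q)$(inv p 2))" unfolding c2 isH_def by simp
  moreover have "isQ ((inverse a *\<^sub>R q)$(inv p 3))" unfolding c3 by (rule q3)
  ultimately show ?R using d by blast
next
  assume ?R
  then obtain m1 m2 m3 where d: "m1 \<noteq> m2" "m1 \<noteq> m3" "m2 \<noteq> m3"
    and h: "isZ ((inverse a *\<^sub>R q)$m1)" "isH ((inverse a *\<^sub>R q)$m2)" "isQ ((inverse a *\<^sub>R q)$m3)"
    by blast
  define z where "z = inverse a *\<^sub>R q"
  obtain i where i: "z$m1 = 0 + 1 * of_int i" using h(1) unfolding z_def by (rule isZ_E)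
  obtain j where j: "z$m2 = 1/2 + 1 * of_int j" using h(2) unfolding z_def by (rule isH_E)
  obtain n where n: "z$m3 = 1/4 + 1/2 * of_int n" using h(3) unfolding z_def by (rule isQ_E)
  define k where "k = n div 2"
  define e :: real where "e = (if n mod 2 = 0 then 1/4 else 3/4)"
  have nk: "n = 2 * k + n mod 2" unfolding k_def by simp
  have "n mod 2 = 0 \<or> n mod 2 = 1" by auto
  then have ke: "z$m3 = of_int k + e"
  proof
    assume "n mod 2 = 0"
    then have "of_int n = 2 * (of_int k :: real)" using nk by (metis add.right_neutral of_int_mult of_int_numeral)
    then show ?thesis using n \<open>n mod 2 = 0\<close> unfolding e_def by simp
  next
    assume "n mod 2 = 1"
    then have "of_int n = 2 * (of_int k :: real) + 1" using nk by (metis of_int_add of_int_mult of_int_numeral of_int_1)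
    then show ?thesis using n \<open>n mod 2 = 1\<close> unfolding e_def by (simp add: field_simps)
  qed
  define t where "t = (vector [of_int i, of_int j + 1/2, of_int k + e] :: real^3)"
  define p where "p = (\<lambda>m::3. if m = m1 then 1 else if m = m2 then 2 else (3::3))"
  have eW: "e \<in> {1/4, 3/4 :: real}" unfolding e_def by simp
  have tW: "t \<in> W_triples" unfolding W_triples_def t_def
    using eW by blast
  have pp: "p permutes UNIV" unfolding p_def by (rule perm3[OF d])
  have e3: "\<And>m::3. m = m1 \<or> m = m2 \<or> m = m3"
    using three_cases[OF d] by blast
  have "z = (\<chi> m. t $ p m)"
  proof (subst vec_eq_iff, rule allI)
    fix m :: 3
    from e3[of m] show "z $ m = (\<chi> m. t $ p m) $ m"
      using d i j ke by (auto simp: p_def t_def)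
  qed
  moreover have "q = a *\<^sub>R z" unfolding z_def using assms by simp
  ultimately have "q = a *\<^sub>R (\<chi> m. t $ p m)" by simp
  then show "q \<in> W_set a" unfolding W_set_def using tW pp by blast
qed

lemma Gamma_char:
  assumes "a > 0"
  shows "q \<in> Gamma_set a \<longleftrightarrow> (\<forall>m. isZ ((inverse a *\<^sub>R q)$m)) \<or> (\<forall>m. isH ((inverse a *\<^sub>R q)$m))"
proof
  assume "q \<in> Gamma_set a"
  then obtain f where "q = a *\<^sub>R (\<chi> i. of_int (f i)) \<or> q = a *\<^sub>R (\<chi> i. of_int (f i) + 1/2)"
    unfolding Gamma_set_def by blast
  then show "(\<forall>m. isZ ((inverse a *\<^sub>R q)$m)) \<or> (\<forall>m. isH ((inverse a *\<^sub>R q)$m))"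
  proof
    assume "q = a *\<^sub>R (\<chi> i. of_int (f i))"
    then have "\<forall>m. isZ ((inverse a *\<^sub>R q)$m)" using assms by (simp add: isZ_def)
    then show ?thesis by blast
  next
    assume "q = a *\<^sub>R (\<chi> i. of_int (f i) + 1/2)"
    then have "\<forall>m. isH ((inverse a *\<^sub>R q)$m)" using assms by (simp add: isH_def)
    then show ?thesis by blast
  qed
next
  assume "(\<forall>m. isZ ((inverse a *\<^sub>R q)$m)) \<or> (\<forall>m. isH ((inverse a *\<^sub>R q)$m))"
  then show "q \<in> Gamma_set a"
  proof
    assume h: "\<forall>m. isZ ((inverse a *\<^sub>R q)$m)"
    define f where "f m = \<lfloor>(inverse a *\<^sub>R q)$m\<rfloor>" for m
    have "\<And>m. of_int (f m) = (inverse a *\<^sub>R q)$m"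
      using h unfolding f_def isZ_def by (metis Ints_cases floor_of_int)
    then have "q = a *\<^sub>R (\<chi> i. of_int (f i))" using assms by (simp add: vec_eq_iff)
    then show ?thesis unfolding Gamma_set_def by blast
  next
    assume h: "\<forall>m. isH ((inverse a *\<^sub>R q)$m)"
    define f where "f m = \<lfloor>(inverse a *\<^sub>R q)$m - 1/2\<rfloor>" for m
    have "\<And>m. of_int (f m) = (inverse a *\<^sub>R q)$m - 1/2"
      using h unfolding f_def isH_def by (metis Ints_cases floor_of_int)
    then have "q = a *\<^sub>R (\<chi> i. of_int (f i) + 1/2)" using assms by (simp add: vec_eq_iff)
    then show ?thesis unfolding Gamma_set_def by blast
  qed
qed

lemma L2_char:
  assumes "a > 0"
  shows "q \<in> L2_set a \<longleftrightarrow> Cl (inverse a *\<^sub>R q)"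
  unfolding L2_set_def Cl_def Un_iff Gamma_char[OF assms] W_char[OF assms] by blast

lemma Ints_iff_diff:
  assumes d: "v - u \<in> \<int>" shows "(u \<in> \<int> \<longleftrightarrow> (v::real) \<in> \<int>)"
proof
  assume a: "u \<in> \<int>" have "(v - u) + u \<in> \<int>" by (rule Ints_add[OF d a])
  then show "v \<in> \<int>" by simp
next
  assume a: "v \<in> \<int>" have "v - (v - u) \<in> \<int>" by (rule Ints_diff[OF a d])
  moreover have "v - (v - u) = u" by simp
  ultimately show "u \<in> \<int>" by metis
qed

lemma Ints_iff_add:
  assumes d: "v + u \<in> \<int>" shows "(u \<in> \<int> \<longleftrightarrow> (v::real) \<in> \<int>)"
proof
  assume a: "u \<in> \<int>" have "(v + u) - u \<in> \<int>" by (rule Ints_diff[OF d a])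
  then show "v \<in> \<int>" by simp
next
  assume a: "v \<in> \<int>" have "(v + u) - v \<in> \<int>" by (rule Ints_diff[OF d a])
  then show "u \<in> \<int>" by simp
qed

lemma cls_aff:
  fixes s r n :: real
  assumes s: "s = 1 \<or> s = -1" and n: "n \<in> \<int>"
  shows "(isZ (s * r + n) \<longleftrightarrow> isZ r) \<and> (isH (s * r + n) \<longleftrightarrow> isH r) \<and> (isQ (s * r + n) \<longleftrightarrow> isQ r)"
  using s
proof
  assume s1: "s = 1"
  have "isZ (s * r + n) \<longleftrightarrow> isZ r" unfolding isZ_def s1
    by (rule sym, rule Ints_iff_diff) (simp add: n)
  moreover have "isH (s * r + n) \<longleftrightarrow> isH r" unfolding isH_def s1
    by (rule sym, rule Ints_iff_diff) (simp add: n)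
  moreover have "isQ (s * r + n) \<longleftrightarrow> isQ r" unfolding isQ_def s1
  proof (rule sym, rule Ints_iff_diff)
    have "2 * (1 * r + n) - 1 / 2 - (2 * r - 1 / 2) = 2 * n" by simp
    then show "2 * (1 * r + n) - 1 / 2 - (2 * r - 1 / 2) \<in> \<int>" using n by simp
  qed
  ultimately show ?thesis by blast
next
  assume s1: "s = -1"
  have "isZ (s * r + n) \<longleftrightarrow> isZ r" unfolding isZ_def s1
    by (rule sym, rule Ints_iff_add) (simp add: n)
  moreover have "isH (s * r + n) \<longleftrightarrow> isH r" unfolding isH_def s1
  proof (rule sym, rule Ints_iff_add)
    have "- 1 * r + n - 1 / 2 + (r - 1 / 2) = n - 1" by simp
    then show "- 1 * r + n - 1 / 2 + (r - 1 / 2) \<in> \<int>" using n by simp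
  qed
  moreover have "isQ (s * r + n) \<longleftrightarrow> isQ r" unfolding isQ_def s1
  proof (rule sym, rule Ints_iff_add)
    have "2 * (- 1 * r + n) - 1 / 2 + (2 * r - 1 / 2) = 2 * n - 1" by simp
    then show "2 * (- 1 * r + n) - 1 / 2 + (2 * r - 1 / 2) \<in> \<int>" using n by simp
  qed
  ultimately show ?thesis by blast
qed

lemma Cl_cong:
  assumes "\<forall>m. (isZ (v$m) \<longleftrightarrow> isZ (u$m)) \<and> (isH (v$m) \<longleftrightarrow> isH (u$m)) \<and> (isQ (v$m) \<longleftrightarrow> isQ (u$m))"
  shows "Cl v \<longleftrightarrow> Cl u"
  unfolding Cl_def using assms by simp

lemma Cl_aff:
  assumes "\<forall>m. sg m = 1 \<or> sg m = -1" "\<forall>m. c$m \<in> \<int>"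
  shows "Cl (c + (\<chi> m. sg m * y$m)) \<longleftrightarrow> Cl y"
proof (rule Cl_cong, rule allI)
  fix m
  have e: "(c + (\<chi> m. sg m * y$m))$m = sg m * y$m + c$m" by (simp add: add.commute)
  then show "(isZ ((c + (\<chi> m. sg m * y$m))$m) \<longleftrightarrow> isZ (y$m)) \<and> (isH ((c + (\<chi> m. sg m * y$m))$m) \<longleftrightarrow> isH (y$m)) \<and> (isQ ((c + (\<chi> m. sg m * y$m))$m) \<longleftrightarrow> isQ (y$m))"
    unfolding e using cls_aff[of "sg m" "c$m" "y$m"] assms by blast
qed

lemma Cl_perm:
  assumes p: "p permutes (UNIV :: 3 set)"
  shows "Cl (\<chi> m. u$(p m)) \<longleftrightarrow> Cl u"
proof -
  have pi: "\<And>x. p (inv p x) = x" and ip: "\<And>x. inv p (p x) = x" using permutes_inverses[OF p] by blast+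
  have ij: "inj p" using permutes_inj[OF p] .
  have ij2: "inj (inv p)" using permutes_inj[OF permutes_inv[OF p]] .
  show ?thesis
  proof
    assume "Cl (\<chi> m. u$(p m))"
    then have H: "(\<forall>m. isZ ((\<chi> m. u$(p m))$m)) \<or> (\<forall>m. isH ((\<chi> m. u$(p m))$m)) \<or>
     (\<exists>m1 m2 m3. m1 \<noteq> m2 \<and> m1 \<noteq> m3 \<and> m2 \<noteq> m3 \<and> isZ ((\<chi> m. u$(p m))$m1) \<and> isH ((\<chi> m. u$(p m))$m2) \<and> isQ ((\<chi> m. u$(p m))$m3))"
      by (simp only: Cl_def)
    from H show "Cl u"
    proof (elim disjE exE conjE)
      assume h: "\<forall>m. isZ ((\<chi> m. u$(p m))$m)"
      have "\<forall>m. isZ (u$m)"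
      proof
        fix m show "isZ (u$m)" using h[rule_format, of "inv p m"] by (simp add: pi)
      qed
      then show ?thesis unfolding Cl_def by blast
    next
      assume h: "\<forall>m. isH ((\<chi> m. u$(p m))$m)"
      have "\<forall>m. isH (u$m)"
      proof
        fix m show "isH (u$m)" using h[rule_format, of "inv p m"] by (simp add: pi)
      qed
      then show ?thesis unfolding Cl_def by blast
    next
      fix m1 m2 m3 :: 3
      assume "m1 \<noteq> m2" "m1 \<noteq> m3" "m2 \<noteq> m3" "isZ ((\<chi> m. u$(p m))$m1)" "isH ((\<chi> m. u$(p m))$m2)" "isQ ((\<chi> m. u$(p m))$m3)"
      then have "p m1 \<noteq> p m2 \<and> p m1 \<noteq> p m3 \<and> p m2 \<noteq> p m3 \<and> isZ (u$(p m1)) \<and> isH (u$(p m2)) \<and> isQ (u$(p m3))"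
        using ij by (simp add: inj_eq)
      then show ?thesis unfolding Cl_def by blast
    qed
  next
    assume "Cl u"
    then have H: "(\<forall>m. isZ (u$m)) \<or> (\<forall>m. isH (u$m)) \<or>
     (\<exists>m1 m2 m3. m1 \<noteq> m2 \<and> m1 \<noteq> m3 \<and> m2 \<noteq> m3 \<and> isZ (u$m1) \<and> isH (u$m2) \<and> isQ (u$m3))"
      by (simp only: Cl_def)
    from H show "Cl (\<chi> m. u$(p m))"
    proof (elim disjE exE conjE)
      assume h: "\<forall>m. isZ (u$m)"
      then show ?thesis unfolding Cl_def by simp
    next
      assume h: "\<forall>m. isH (u$m)"
      then show ?thesis unfolding Cl_def by simp
    next
      fix m1 m2 m3 :: 3
      assume "m1 \<noteq> m2" "m1 \<noteq> m3" "m2 \<noteq> m3" "isZ (u$m1)" "isH (u$m2)" "isQ (u$m3)"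
      then have "inv p m1 \<noteq> inv p m2 \<and> inv p m1 \<noteq> inv p m3 \<and> inv p m2 \<noteq> inv p m3 \<and>
          isZ ((\<chi> m. u$(p m))$(inv p m1)) \<and> isH ((\<chi> m. u$(p m))$(inv p m2)) \<and> isQ ((\<chi> m. u$(p m))$(inv p m3))"
        using ij2 by (simp add: inj_eq pi)
      then show ?thesis unfolding Cl_def by blast
    qed
  qed
qed

lemma orth_perm:
  assumes p: "p permutes (UNIV :: 'n::finite set)"
  shows "orthogonal_transformation (\<lambda>u::real^'n. \<chi> m. u$(p m))"
  unfolding orthogonal_transformation_def
proof
  show "linear (\<lambda>u::real^'n. \<chi> m. u$(p m))"
    by (intro linearI) (simp_all add: vec_eq_iff)
  show "\<forall>v w. (\<chi> m. v$(p m)) \<bullet> (\<chi> m. w$(p m)) = v \<bullet> (w::real^'n)"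
  proof (intro allI)
    fix v w :: "real^'n"
    have "(\<chi> m. v$(p m)) \<bullet> (\<chi> m. w$(p m)) = (\<Sum>m\<in>UNIV. v$(p m) * w$(p m))"
      by (simp add: inner_vec_def)
    also have "\<dots> = (\<Sum>m\<in>UNIV. v$m * w$m)"
      using sum.permute[OF p, of "\<lambda>m. v$m * w$m"] by (simp add: comp_def)
    also have "\<dots> = v \<bullet> w" by (simp add: inner_vec_def)
    finally show "(\<chi> m. v$(p m)) \<bullet> (\<chi> m. w$(p m)) = v \<bullet> w" .
  qed
qed

lemma orth_sign:
  assumes s: "\<forall>m. sg m = 1 \<or> sg m = (-1::real)"
  shows "orthogonal_transformation (\<lambda>u::real^'n. \<chi> m. sg m * u$m)"
  unfolding orthogonal_transformation_def
proof
  show "linear (\<lambda>u::real^'n. \<chi> m. sg m * u$m)"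
    by (intro linearI) (simp_all add: vec_eq_iff algebra_simps)
  have sq: "\<And>m. sg m * sg m = 1" using s by (metis mult_1 mult_minus1 minus_minus)
  show "\<forall>v w. (\<chi> m. sg m * v$m) \<bullet> (\<chi> m. sg m * w$m) = v \<bullet> (w::real^'n)"
  proof (intro allI)
    fix v w :: "real^'n"
    have "(\<chi> m. sg m * v$m) \<bullet> (\<chi> m. sg m * w$m) = (\<Sum>m\<in>UNIV. (sg m * sg m) * (v$m * w$m))"
      by (simp add: inner_vec_def algebra_simps)
    also have "\<dots> = v \<bullet> w" by (simp add: inner_vec_def sq)
    finally show "(\<chi> m. sg m * v$m) \<bullet> (\<chi> m. sg m * w$m) = v \<bullet> w" .
  qed
qed

lemma dist_sum: "dist (x::real^'n) y = sqrt (\<Sum>m\<in>UNIV. (x$m - y$m)^2)"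
  by (simp add: dist_vec_def L2_Norm.L2_set_def dist_real_def)

lemma main_w:
  assumes a: "a > 0" and w: "w \<in> W_set a"
  shows "emeasure lebesgue (voronoi_cell (L2_set a) w) = ennreal (451/6912 * a^3)"
proof -
  obtain t p where tp: "t \<in> W_triples" "p permutes (UNIV :: 3 set)" "w = a *\<^sub>R (\<chi> i. t $ p i)"
    using w unfolding W_set_def by blast
  from tp(1) obtain i j k e where t: "t = vector [of_int i, of_int j + 1/2, of_int k + e]" and e: "e \<in> {1/4, 3/4 :: real}"
    unfolding W_triples_def by blast
  define sg :: "3 \<Rightarrow> real" where "sg m = (if m = 3 \<and> e = 3/4 then -1 else 1)" for m
  define c :: "real^3" where "c = vector [of_int i, of_int j, of_int k + (if e = 3/4 then 1 else 0)]"
  define \<rho> where "\<rho> = (\<lambda>y::real^3. \<chi> m. sg m * y$m)"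
  define \<sigma> where "\<sigma> = (\<lambda>u::real^3. \<chi> m. u$(p m))"
  define \<sigma>' where "\<sigma>' = (\<lambda>u::real^3. \<chi> m. u$(inv p m))"
  define F where "F = (\<lambda>y. a *\<^sub>R \<sigma> (c + \<rho> y))"
  have pi: "\<And>x. p (inv p x) = x" and ip: "\<And>x. inv p (p x) = x" using permutes_inverses[OF tp(2)] by blast+
  have sg1: "\<forall>m. sg m = 1 \<or> sg m = -1" unfolding sg_def by auto
  have sgsq: "\<And>m. sg m * sg m = 1" unfolding sg_def by auto
  have cZ: "\<forall>m. c$m \<in> \<int>" unfolding c_def forall_3 by auto
  have t0: "c + \<rho> w0 = t"
    using e unfolding t c_def \<rho>_def w0_def sg_def by (auto simp: vec_eq_iff forall_3)
  have Fw0: "F w0 = w" unfolding F_def t0 \<sigma>_def tp(3) ..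
  have FL: "F y \<in> L2_set a \<longleftrightarrow> Cl y" for y
  proof -
    have "inverse a *\<^sub>R F y = \<sigma> (c + \<rho> y)" unfolding F_def using a by simp
    then have "F y \<in> L2_set a \<longleftrightarrow> Cl (\<sigma> (c + \<rho> y))" using L2_char[OF a] by simp
    also have "\<dots> \<longleftrightarrow> Cl (c + \<rho> y)" unfolding \<sigma>_def by (rule Cl_perm[OF tp(2)])
    also have "\<dots> \<longleftrightarrow> Cl y" unfolding \<rho>_def by (rule Cl_aff[OF sg1 cZ])
    finally show ?thesis .
  qed
  have Fd: "dist (F y) (F y') = a * dist y y'" for y y'
  proof -
    have "\<And>m. (F y $ m - F y' $ m)^2 = a^2 * (y $ p m - y' $ p m)^2"
    proof -
      fix m
      have h: "F y $ m - F y' $ m = a * sg (p m) * (y $ p m - y' $ p m)"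
        unfolding F_def \<sigma>_def \<rho>_def by (simp add: algebra_simps)
      have "(F y $ m - F y' $ m)^2 = (a * sg (p m) * (y $ p m - y' $ p m))^2" by (simp only: h)
      also have "\<dots> = a^2 * (sg (p m) * sg (p m)) * (y $ p m - y' $ p m)^2"
        by (simp add: power2_eq_square algebra_simps)
      also have "\<dots> = a^2 * (y $ p m - y' $ p m)^2" by (simp add: sgsq)
      finally show "(F y $ m - F y' $ m)^2 = a^2 * (y $ p m - y' $ p m)^2" .
    qed
    then have "(\<Sum>m\<in>UNIV. (F y $ m - F y' $ m)^2) = a^2 * (\<Sum>m\<in>UNIV. (y $ p m - y' $ p m)^2)"
      by (simp add: sum_distrib_left)
    also have "(\<Sum>m\<in>UNIV. (y $ p m - y' $ p m)^2) = (\<Sum>m\<in>UNIV. (y $ m - y' $ m)^2)"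
      using sum.permute[OF tp(2), of "\<lambda>m. (y $ m - y' $ m)^2"] by (simp add: comp_def)
    finally have "(\<Sum>m\<in>UNIV. (F y $ m - F y' $ m)^2) = a^2 * (\<Sum>m\<in>UNIV. (y $ m - y' $ m)^2)" .
    then show ?thesis unfolding dist_sum using a by (simp add: real_sqrt_mult)
  qed
  have Fs: "\<exists>y. x = F y" for x
  proof
    define v where "v = \<sigma>' (inverse a *\<^sub>R x)"
    have rr: "\<rho> (\<rho> z) = z" for z unfolding \<rho>_def by (simp add: vec_eq_iff mult.assoc[symmetric] sgsq)
    have ss: "\<sigma> (\<sigma>' u) = u" for u unfolding \<sigma>_def \<sigma>'_def by (simp add: vec_eq_iff pi ip)
    show "x = F (\<rho> (v - c))" unfolding F_def rr using a by (simp add: v_def ss)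
  qed
  have cell: "voronoi_cell (L2_set a) w = F ` Cell1"
  proof (rule set_eqI, rule iffI)
    fix x assume x: "x \<in> voronoi_cell (L2_set a) w"
    obtain y where xy: "x = F y" using Fs by blast
    have "y \<in> Cell1" unfolding Cell1_def
    proof (intro CollectI allI impI)
      fix y' assume "Cl y'"
      then have "F y' \<in> L2_set a" using FL by blast
      then have "dist x w \<le> dist x (F y')" using x unfolding voronoi_cell_def by blast
      then have "a * dist y w0 \<le> a * dist y y'" unfolding xy Fw0[symmetric] Fd .
      then show "dist y w0 \<le> dist y y'" using a by simp
    qed
    then show "x \<in> F ` Cell1" using xy by blast
  next
    fix x assume "x \<in> F ` Cell1"
    then obtain y where y: "y \<in> Cell1" "x = F y" by blast
    show "x \<in> voronoi_cell (L2_set a) w" unfolding voronoi_cell_def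
    proof (intro CollectI ballI)
      fix q assume q: "q \<in> L2_set a"
      obtain y' where qy: "q = F y'" using Fs by blast
      have "Cl y'" using q FL qy by blast
      then have "dist y w0 \<le> dist y y'" using y(1) unfolding Cell1_def by blast
      then have "a * dist y w0 \<le> a * dist y y'" using a by simp
      then show "dist x w \<le> dist x q" unfolding y(2) qy Fw0[symmetric] Fd .
    qed
  qed
  have img: "F ` Pset = (\<lambda>x. a *\<^sub>R x + 0) ` (\<sigma> ` ((+) c ` (\<rho> ` Pset)))"
    unfolding F_def by (simp add: image_image)
  have o1: "orthogonal_transformation \<rho>" unfolding \<rho>_def by (rule orth_sign[OF sg1])
  have o2: "orthogonal_transformation \<sigma>" unfolding \<sigma>_def by (rule orth_perm[OF tp(2)])
  have m1: "\<rho> ` Pset \<in> lmeasurable" "measure lebesgue (\<rho> ` Pset) = 451/6912"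
    using measurable_orthogonal_image[OF o1 Pset_meas(1)] measure_orthogonal_image[OF o1 Pset_meas(1)] Pset_meas(2)
    by auto
  have m2: "(+) c ` (\<rho> ` Pset) \<in> lmeasurable" "measure lebesgue ((+) c ` (\<rho> ` Pset)) = 451/6912"
    using measurable_translation[OF m1(1)] measure_translation[of c "\<rho> ` Pset"] m1(2) by auto
  have m3: "\<sigma> ` ((+) c ` (\<rho> ` Pset)) \<in> lmeasurable" "measure lebesgue (\<sigma> ` ((+) c ` (\<rho> ` Pset))) = 451/6912"
    using measurable_orthogonal_image[OF o2 m2(1)] measure_orthogonal_image[OF o2 m2(1)] m2(2)
    by auto
  have lin: "linear (\<lambda>x::real^3. a *\<^sub>R x + 0)" by (simp add: linear_scaleR)
  have m4: "F ` Pset \<in> lmeasurable" unfolding img by (rule measurable_linear_image[OF lin m3(1)])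
  have m5: "measure lebesgue (F ` Pset) = a^3 * (451/6912)"
    unfolding img measure_lebesgue_affine m3(2) using a by simp
  have "emeasure lebesgue (voronoi_cell (L2_set a) w) = ennreal (measure lebesgue (F ` Pset))"
    unfolding cell Cell1_eq by (rule emeasure_eq_measure2[OF m4])
  then show ?thesis unfolding m5 by (simp add: mult.commute)
qed

theorem mainTheorem4:
  fixes a :: real
  assumes "a > 0"
  shows "(\<forall>w\<in>W_set a. emeasure lebesgue (voronoi_cell (L2_set a) w) = ennreal (451/6912 * a^3))
         \<and> 2 * (125/1152 * a^3) + 12 * (451/6912 * a^3) = a^3"
proof
  show "\<forall>w\<in>W_set a. emeasure lebesgue (voronoi_cell (L2_set a) w) = ennreal (451/6912 * a^3)"
    using main_w[OF assms] by blast
  show "2 * (125/1152 * a^3) + 12 * (451/6912 * a^3) = a^3" by simp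
qed

end
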